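(* Let $(e_n)$ be a uniformly quasi-greedy basic sequence in a Banach lattice $X$ with uniform quasi-greedy constant $C^\vee_{qg}$. Then: (i) for any distinct indices $n_1,\dots,n_m$, $\big\|\bigvee_{k=1}^m\big|\sum_{i=1}^k e_{n_i}\big|\big\|\le C^\vee_{qg}\big\|\sum_{i=1}^m e_{n_i}\big\|$; (ii) for any distinct indices $n_1,\dots,n_m$ and any signs $\varepsilon_i\in\{\pm1\}$, $(2C^\vee_{qg})^{-1}\big\|\bigvee_{k=1}^m\big|\sum_{i=1}^k e_{n_i}\big|\big\|\le\big\|\sum_{i=1}^m\varepsilon_ie_{n_i}\big\|\le\big\|\bigvee_{k=1}^m\big|\sum_{i=1}^k\varepsilon_ie_{n_i}\big|\big\|\le 2C^\vee_{qg}\big\|\sum_{i=1}^m e_{n_i}\big\|$.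
   Context: Let $(e_n)$ be a semi-normalized basic sequence in a Banach lattice $X$ with span $E$ and biorthogonal functionals $e_n^*$. For $x\in E$, the natural greedy ordering $\rho$ of $x$ is the injective map $\mathbb{N}\to\mathbb{N}$ whose range contains $\{n:e_n^*(x)\ne0\}$ and which lists indices by non-increasing $|e_n^*(x)|$, ties broken by increasing index; $\mathcal{G}_m(x)=\sum_{n=1}^m e^*_{\rho(n)}(x)e_{\rho(n)}$ and $\mathcal{G}^\vee_m(x)=\bigvee_{n=1}^m|\mathcal{G}_n(x)|$. The sequence is uniformly quasi-greedy if $C^\vee_{qg}:=\sup_m\sup_{x\in E,\|x\|=1}\|\mathcal{G}^\vee_m(x)\|<\infty$; $C^\vee_{qg}$ is the uniform quasi-greedy constant. (Equivalently, $\sup_m\|G^\vee_{\pi,m}(x)\|\le C^\vee_{qg}\|x\|$ for every greedy ordering $\pi$, where a greedy ordering is any injective $\pi$ whose range contains the support and with $|e^*_{\pi(n)}(x)|$ non-increasing, $G^\vee_{\pi,m}(x)=\bigvee_{n\le m}|\sum_{k\le n}e^*_{\pi(k)}(x)e_{\pi(k)}|$.) *)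

theory Defs
  imports "HOL-Analysis.Analysis"
begin

definition lat_abs :: "'a::{uminus, sup} \<Rightarrow> 'a" where
  "lat_abs x = sup x (- x)"

class banach_lattice = banach + ordered_real_vector + lattice +
  assumes lattice_norm: "sup x (- x) \<le> sup y (- y) \<Longrightarrow> norm x \<le> norm y"

text \<open>Join of the absolute values: abs_join f m = |f 1| \<or> ... \<or> |f m| (and 0 for m = 0;
  since absolute values are nonnegative, joining with 0 does not change the value for m \<ge> 1).\<close>
primrec abs_join :: "(nat \<Rightarrow> 'a::banach_lattice) \<Rightarrow> nat \<Rightarrow> 'a" where
  "abs_join f 0 = 0"
| "abs_join f (Suc k) = sup (abs_join f k) (lat_abs (f (Suc k)))"

definition clspan :: "(nat \<Rightarrow> 'a::real_normed_vector) \<Rightarrow> 'a set" where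
  "clspan e = closure (span (range e))"

definition basic_sequence :: "(nat \<Rightarrow> 'a::real_normed_vector) \<Rightarrow> bool" where
  "basic_sequence e \<longleftrightarrow> (\<forall>x \<in> clspan e. \<exists>!a. (\<lambda>n. a n *\<^sub>R e n) sums x)"

definition semi_normalized :: "(nat \<Rightarrow> 'a::real_normed_vector) \<Rightarrow> bool" where
  "semi_normalized e \<longleftrightarrow> (\<exists>c d. 0 < c \<and> (\<forall>n. c \<le> norm (e n) \<and> norm (e n) \<le> d))"

definition coef :: "(nat \<Rightarrow> 'a::real_normed_vector) \<Rightarrow> nat \<Rightarrow> 'a \<Rightarrow> real" where
  "coef e k x = (THE a. (\<lambda>n. a n *\<^sub>R e n) sums x) k"

definition natural_greedy_ordering ::
    "(nat \<Rightarrow> 'a::real_normed_vector) \<Rightarrow> 'a \<Rightarrow> (nat \<Rightarrow> nat) \<Rightarrow> bool" where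
  "natural_greedy_ordering e x \<rho> \<longleftrightarrow>
     inj \<rho> \<and> {n. coef e n x \<noteq> 0} \<subseteq> range \<rho> \<and>
     (\<forall>i j. i < j \<longrightarrow>
        \<bar>coef e (\<rho> i) x\<bar> > \<bar>coef e (\<rho> j) x\<bar> \<or>
        (\<bar>coef e (\<rho> i) x\<bar> = \<bar>coef e (\<rho> j) x\<bar> \<and> \<rho> i < \<rho> j))"

definition greedy_sum :: "(nat \<Rightarrow> 'a::real_normed_vector) \<Rightarrow> (nat \<Rightarrow> nat) \<Rightarrow> nat \<Rightarrow> 'a \<Rightarrow> 'a" where
  "greedy_sum e \<rho> m x = (\<Sum>n<m. coef e (\<rho> n) x *\<^sub>R e (\<rho> n))"

definition greedy_max :: "(nat \<Rightarrow> 'a::banach_lattice) \<Rightarrow> (nat \<Rightarrow> nat) \<Rightarrow> nat \<Rightarrow> 'a \<Rightarrow> 'a" where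
  "greedy_max e \<rho> m x = abs_join (\<lambda>n. greedy_sum e \<rho> n x) m"

definition uqg_bound :: "(nat \<Rightarrow> 'a::banach_lattice) \<Rightarrow> real \<Rightarrow> bool" where
  "uqg_bound e C \<longleftrightarrow> (\<forall>x \<in> clspan e. \<forall>\<rho> m. natural_greedy_ordering e x \<rho> \<longrightarrow>
       norm (greedy_max e \<rho> m x) \<le> C * norm x)"

definition uqg_constant :: "(nat \<Rightarrow> 'a::banach_lattice) \<Rightarrow> real" where
  "uqg_constant e = Sup {norm (greedy_max e \<rho> m x) | x \<rho> m.
      x \<in> clspan e \<and> norm x = 1 \<and> natural_greedy_ordering e x \<rho>}"

end

theory Submission
  imports Defs "HOL-Analysis.Analysis"
begin


lemma la_ge: fixes x :: "'a::banach_lattice" shows "x \<le> lat_abs x" "- x \<le> lat_abs x"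
  by (auto simp: lat_abs_def)

lemma la_leI: fixes x :: "'a::banach_lattice" shows "x \<le> u \<Longrightarrow> - x \<le> u \<Longrightarrow> lat_abs x \<le> u"
  by (auto simp: lat_abs_def)

lemma la_nonneg: fixes x :: "'a::banach_lattice" shows "0 \<le> lat_abs x"
proof -
  have "x + - x \<le> lat_abs x + lat_abs x" by (intro add_mono la_ge)
  hence "0 \<le> lat_abs x + lat_abs x" by simp
  hence "(1/2::real) *\<^sub>R 0 \<le> (1/2::real) *\<^sub>R (lat_abs x + lat_abs x)"
    by (intro scaleR_left_mono) auto
  also have "(1/2::real) *\<^sub>R (lat_abs x + lat_abs x) = lat_abs x"
  proof -
    have "(1/2::real) *\<^sub>R (lat_abs x + lat_abs x) = ((1/2::real) + 1/2) *\<^sub>R lat_abs x"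
      by (simp only: scaleR_add_left scaleR_add_right)
    thus ?thesis by simp
  qed
  finally show ?thesis by simp
qed

lemma la_of_nonneg: fixes x :: "'a::banach_lattice" shows "0 \<le> x \<Longrightarrow> lat_abs x = x"
proof -
  assume h: "0 \<le> x"
  hence "- x \<le> 0" by simp
  hence "- x \<le> x" using h by (rule order.trans)
  thus ?thesis unfolding lat_abs_def by (rule sup_absorb1)
qed

lemma la_zero[simp]: "lat_abs (0::'a::banach_lattice) = 0"
  by (simp add: la_of_nonneg)

lemma la_triangle: fixes a b :: "'a::banach_lattice" shows "lat_abs (a + b) \<le> lat_abs a + lat_abs b"
proof (rule la_leI)
  show "a + b \<le> lat_abs a + lat_abs b" by (intro add_mono la_ge)
  have "- a + - b \<le> lat_abs a + lat_abs b" by (intro add_mono la_ge)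
  thus "- (a + b) \<le> lat_abs a + lat_abs b" by (simp add: add.commute)
qed

lemma la_minus: fixes a :: "'a::banach_lattice" shows "lat_abs (- a) = lat_abs a"
  by (simp add: lat_abs_def sup.commute)

lemma norm_mono_nonneg: fixes a b :: "'a::banach_lattice"
  shows "0 \<le> a \<Longrightarrow> a \<le> b \<Longrightarrow> norm a \<le> norm b"
proof -
  assume h: "0 \<le> a" "a \<le> b"
  hence "- a \<le> b" by (meson neg_le_0_iff_le order.trans)
  hence "sup a (- a) \<le> b" using h by simp
  also have "b \<le> sup b (- b)" by simp
  finally show ?thesis using lattice_norm by blast
qed

lemma norm_la: fixes a :: "'a::banach_lattice" shows "norm (lat_abs a) = norm a"
proof -
  have "lat_abs (lat_abs a) = lat_abs a" by (rule la_of_nonneg[OF la_nonneg])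
  thus ?thesis using lattice_norm[of a "lat_abs a"] lattice_norm[of "lat_abs a" a]
    by (simp add: lat_abs_def)
qed

lemma norm_le_la: fixes a b :: "'a::banach_lattice"
  shows "lat_abs a \<le> b \<Longrightarrow> norm a \<le> norm b"
  by (metis la_nonneg norm_la norm_mono_nonneg)

lemma sup_diff_le: fixes a b c d :: "'a::banach_lattice"
  shows "lat_abs (sup a b - sup c d) \<le> lat_abs (a - c) + lat_abs (b - d)"
proof -
  have g: "sup a b - sup c d \<le> lat_abs (a - c) + lat_abs (b - d)"
    if "0 \<le> lat_abs (b - d)" "0 \<le> lat_abs (a - c)" for a b c d :: 'a
  proof -
    have "a \<le> c + (lat_abs (a - c) + lat_abs (b - d))"
    proof -
      have "a - c \<le> lat_abs (a - c) + lat_abs (b - d)"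
        using la_ge(1)[of "a - c"] that(1) by (metis add_increasing2)
      thus ?thesis by (metis diff_le_eq add.commute)
    qed
    also have "\<dots> \<le> sup c d + (lat_abs (a - c) + lat_abs (b - d))" by simp
    finally have 1: "a \<le> sup c d + (lat_abs (a - c) + lat_abs (b - d))" .
    have "b \<le> d + (lat_abs (a - c) + lat_abs (b - d))"
    proof -
      have "b - d \<le> lat_abs (a - c) + lat_abs (b - d)"
        using la_ge(1)[of "b - d"] that(2) by (metis add_increasing)
      thus ?thesis by (metis diff_le_eq add.commute)
    qed
    also have "\<dots> \<le> sup c d + (lat_abs (a - c) + lat_abs (b - d))" by simp
    finally have 2: "b \<le> sup c d + (lat_abs (a - c) + lat_abs (b - d))" .
    from 1 2 have "sup a b \<le> sup c d + (lat_abs (a - c) + lat_abs (b - d))" by simp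
    thus ?thesis by (metis diff_le_eq add.commute)
  qed
  show ?thesis
  proof (rule la_leI)
    show "sup a b - sup c d \<le> lat_abs (a - c) + lat_abs (b - d)" by (rule g) (rule la_nonneg)+
    have "sup c d - sup a b \<le> lat_abs (c - a) + lat_abs (d - b)" by (rule g) (rule la_nonneg)+
    moreover have "lat_abs (c - a) = lat_abs (a - c)" "lat_abs (d - b) = lat_abs (b - d)"
      by (metis la_minus minus_diff_eq)+
    ultimately show "- (sup a b - sup c d) \<le> lat_abs (a - c) + lat_abs (b - d)" by simp
  qed
qed

lemma norm_sup_diff: fixes a b c d :: "'a::banach_lattice"
  shows "norm (sup a b - sup c d) \<le> norm (a - c) + norm (b - d)"
proof -
  have "norm (sup a b - sup c d) \<le> norm (lat_abs (a - c) + lat_abs (b - d))"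
    by (rule norm_le_la[OF sup_diff_le])
  also have "\<dots> \<le> norm (a - c) + norm (b - d)"
    using norm_triangle_ineq[of "lat_abs (a - c)" "lat_abs (b - d)"] by (simp add: norm_la)
  finally show ?thesis .
qed

lemma norm_la_diff: fixes a c :: "'a::banach_lattice"
  shows "norm (lat_abs a - lat_abs c) \<le> 2 * norm (a - c)"
proof -
  have "norm (lat_abs a - lat_abs c) \<le> norm (a - c) + norm (- a - - c)"
    unfolding lat_abs_def by (rule norm_sup_diff)
  also have "norm (- a - - c) = norm (a - c)" by (metis minus_diff_eq minus_diff_minus norm_minus_cancel)
  finally show ?thesis by simp
qed

lemma sup_scale: fixes a b :: "'a::banach_lattice" assumes "0 \<le> c"
  shows "sup (c *\<^sub>R a) (c *\<^sub>R b) = c *\<^sub>R sup a b"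
proof (cases "c = 0")
  case True thus ?thesis by simp
next
  case False
  hence c: "c > 0" using assms by simp
  show ?thesis
  proof (rule antisym)
    show "sup (c *\<^sub>R a) (c *\<^sub>R b) \<le> c *\<^sub>R sup a b"
      using assms by (simp add: scaleR_left_mono)
    have "inverse c *\<^sub>R (c *\<^sub>R a) \<le> inverse c *\<^sub>R sup (c *\<^sub>R a) (c *\<^sub>R b)"
         "inverse c *\<^sub>R (c *\<^sub>R b) \<le> inverse c *\<^sub>R sup (c *\<^sub>R a) (c *\<^sub>R b)"
      using c by (intro scaleR_left_mono; simp)+
    hence "sup a b \<le> inverse c *\<^sub>R sup (c *\<^sub>R a) (c *\<^sub>R b)" using c by simp
    hence "c *\<^sub>R sup a b \<le> c *\<^sub>R (inverse c *\<^sub>R sup (c *\<^sub>R a) (c *\<^sub>R b))"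
      using c by (intro scaleR_left_mono) auto
    thus "c *\<^sub>R sup a b \<le> sup (c *\<^sub>R a) (c *\<^sub>R b)" using c by simp
  qed
qed

lemma la_scale: fixes a :: "'a::banach_lattice" assumes "0 \<le> c"
  shows "lat_abs (c *\<^sub>R a) = c *\<^sub>R lat_abs a"
  using sup_scale[OF assms, of a "-a"] by (simp add: lat_abs_def)

lemma abs_join_nonneg: "0 \<le> abs_join f L"
  by (induction L) (auto intro: le_supI1)

lemma abs_join_scale: "0 \<le> c \<Longrightarrow> abs_join (\<lambda>j. c *\<^sub>R f j) L = c *\<^sub>R abs_join f L"
  by (induction L) (simp_all add: la_scale sup_scale)

lemma abs_join_cong: "(\<And>t. t \<in> {1..L} \<Longrightarrow> f t = g t) \<Longrightarrow> abs_join f L = abs_join g L"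
  by (induction L) auto

lemma abs_join_ge: "t \<in> {1..L} \<Longrightarrow> lat_abs (f t) \<le> abs_join f L"
proof (induction L)
  case 0 thus ?case by simp
next
  case (Suc L) thus ?case
    by (cases "t = Suc L") (auto intro: le_supI1 simp: le_Suc_eq)
qed

lemma abs_join_le: "(\<And>t. t \<in> {1..L} \<Longrightarrow> lat_abs (f t) \<le> B) \<Longrightarrow> 0 \<le> B \<Longrightarrow> abs_join f L \<le> B"
  by (induction L) auto

lemma abs_join_lip: "norm (abs_join f L - abs_join g L) \<le> (\<Sum>t=1..L. 2 * norm (f t - g t))"
proof (induction L)
  case 0 thus ?case by simp
next
  case (Suc L)
  have "norm (abs_join f (Suc L) - abs_join g (Suc L))
     \<le> norm (abs_join f L - abs_join g L) + norm (lat_abs (f (Suc L)) - lat_abs (g (Suc L)))"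
    by (simp add: norm_sup_diff)
  also have "\<dots> \<le> (\<Sum>t=1..L. 2 * norm (f t - g t)) + 2 * norm (f (Suc L) - g (Suc L))"
    using Suc norm_la_diff by (intro add_mono) auto
  finally show ?case by simp
qed



lemma coef_fin:
  assumes bs: "basic_sequence e" and S: "finite S"
  shows "coef e j (\<Sum>i\<in>S. c i *\<^sub>R e i) = (if j \<in> S then c j else 0)"
proof -
  define x where "x = (\<Sum>i\<in>S. c i *\<^sub>R e i)"
  define b where "b = (\<lambda>i. if i \<in> S then c i else 0)"
  have sm: "(\<lambda>i. b i *\<^sub>R e i) sums x"
  proof -
    have "(\<lambda>i. b i *\<^sub>R e i) sums (\<Sum>i\<in>S. b i *\<^sub>R e i)"
      by (rule sums_finite[OF S]) (simp add: b_def)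
    moreover have "(\<Sum>i\<in>S. b i *\<^sub>R e i) = x" unfolding x_def b_def by (rule sum.cong) auto
    ultimately show ?thesis by simp
  qed
  have "x \<in> span (range e)" unfolding x_def
    by (intro span_sum span_scale span_base) auto
  hence "x \<in> clspan e" unfolding clspan_def using closure_subset by blast
  with bs have ex: "\<exists>!a. (\<lambda>n. a n *\<^sub>R e n) sums x" unfolding basic_sequence_def by blast
  have "(THE a. (\<lambda>n. a n *\<^sub>R e n) sums x) = b" using ex sm by (intro the1_equality) auto
  thus ?thesis unfolding coef_def x_def[symmetric] b_def by simp
qed

lemma coef_zero: "basic_sequence e \<Longrightarrow> coef e j 0 = 0"
  using coef_fin[of e "{}" j] by simp

lemma coef_seq:
  fixes \<sigma> :: "nat \<Rightarrow> nat" and M :: nat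
  assumes bs: "basic_sequence e" and inj: "inj_on \<sigma> {..<M}"
  shows "k < M \<Longrightarrow> coef e (\<sigma> k) (\<Sum>k<M. a k *\<^sub>R e (\<sigma> k)) = a k"
    and "j \<notin> \<sigma> ` {..<M} \<Longrightarrow> coef e j (\<Sum>k<M. a k *\<^sub>R e (\<sigma> k)) = 0"
proof -
  define g where "g = the_inv_into {..<M} \<sigma>"
  have eq: "(\<Sum>k<M. a k *\<^sub>R e (\<sigma> k)) = (\<Sum>j\<in>\<sigma> ` {..<M}. a (g j) *\<^sub>R e j)"
    using inj by (simp add: sum.reindex g_def the_inv_into_f_f)
  show "k < M \<Longrightarrow> coef e (\<sigma> k) (\<Sum>k<M. a k *\<^sub>R e (\<sigma> k)) = a k"
  proof -
    assume k: "k < M"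
    have "coef e (\<sigma> k) (\<Sum>j\<in>\<sigma> ` {..<M}. a (g j) *\<^sub>R e j)
       = (if \<sigma> k \<in> \<sigma> ` {..<M} then a (g (\<sigma> k)) else 0)"
      by (rule coef_fin[OF bs]) simp
    thus ?thesis unfolding eq using inj k by (simp add: g_def the_inv_into_f_f)
  qed
  show "j \<notin> \<sigma> ` {..<M} \<Longrightarrow> coef e j (\<Sum>k<M. a k *\<^sub>R e (\<sigma> k)) = 0"
  proof -
    assume j: "j \<notin> \<sigma> ` {..<M}"
    have "coef e j (\<Sum>j\<in>\<sigma> ` {..<M}. a (g j) *\<^sub>R e j)
       = (if j \<in> \<sigma> ` {..<M} then a (g j) else 0)"
      by (rule coef_fin[OF bs]) simp
    thus ?thesis unfolding eq using j by simp
  qed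
qed

definition rho :: "(nat \<Rightarrow> nat) \<Rightarrow> nat \<Rightarrow> nat \<Rightarrow> nat" where
  "rho \<sigma> M i = (if i < M then \<sigma> i else enumerate (- \<sigma> ` {..<M}) (i - M))"

lemma ngo:
  assumes bs: "basic_sequence e" and inj: "inj_on \<sigma> {..<M}"
    and dec: "\<And>i j. i < j \<Longrightarrow> j < M \<Longrightarrow> \<bar>a j\<bar> < \<bar>a i\<bar>"
    and nz: "\<And>k. k < M \<Longrightarrow> a k \<noteq> 0"
  shows "natural_greedy_ordering e (\<Sum>k<M. a k *\<^sub>R e (\<sigma> k)) (rho \<sigma> M)"
    and "j \<le> M \<Longrightarrow> greedy_sum e (rho \<sigma> M) j (\<Sum>k<M. a k *\<^sub>R e (\<sigma> k)) = (\<Sum>k<j. a k *\<^sub>R e (\<sigma> k))"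
proof -
  define x where "x = (\<Sum>k<M. a k *\<^sub>R e (\<sigma> k))"
  define T where "T = - \<sigma> ` {..<M}"
  have infT: "infinite T" unfolding T_def
    by (metis Compl_eq_Diff_UNIV Diff_infinite_finite finite_imageI finite_lessThan infinite_UNIV_nat)
  have inT: "enumerate T i \<in> T" for i by (rule enumerate_in_set[OF infT])
  have c1: "k < M \<Longrightarrow> coef e (\<sigma> k) x = a k" for k unfolding x_def by (rule coef_seq(1)[OF bs inj])
  have c2: "j \<in> T \<Longrightarrow> coef e j x = 0" for j unfolding x_def T_def by (rule coef_seq(2)[OF bs inj]) simp
  have r1: "i < M \<Longrightarrow> rho \<sigma> M i = \<sigma> i" for i by (simp add: rho_def)
  have r2: "\<not> i < M \<Longrightarrow> rho \<sigma> M i = enumerate T (i - M)" for i by (simp add: rho_def T_def)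
  have "inj (rho \<sigma> M)"
  proof (rule injI)
    fix i j assume h: "rho \<sigma> M i = rho \<sigma> M j"
    show "i = j"
    proof (cases "i < M"; cases "j < M")
      assume "i < M" "j < M" thus ?thesis using h inj by (simp add: r1 inj_on_def)
    next
      assume "i < M" "\<not> j < M" thus ?thesis using h inT[of "j - M"] by (force simp add: r1 r2 T_def)
    next
      assume "\<not> i < M" "j < M" thus ?thesis using h inT[of "i - M"] by (force simp add: r1 r2 T_def)
    next
      assume a: "\<not> i < M" "\<not> j < M"
      hence "enumerate T (i - M) = enumerate T (j - M)" using h by (simp add: r2)
      hence "i - M = j - M" by (metis enumerate_mono infT less_irrefl linorder_neqE_nat)
      thus ?thesis using a by simp
    qed
  qed
  moreover have "{n. coef e n x \<noteq> 0} \<subseteq> range (rho \<sigma> M)"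
  proof
    fix n assume "n \<in> {n. coef e n x \<noteq> 0}"
    hence "n \<notin> T" using c2 by auto
    then obtain k where "k < M" "n = \<sigma> k" unfolding T_def by auto
    thus "n \<in> range (rho \<sigma> M)" by (metis r1 rangeI)
  qed
  moreover have "\<forall>i j. i < j \<longrightarrow>
        \<bar>coef e (rho \<sigma> M i) x\<bar> > \<bar>coef e (rho \<sigma> M j) x\<bar> \<or>
        (\<bar>coef e (rho \<sigma> M i) x\<bar> = \<bar>coef e (rho \<sigma> M j) x\<bar> \<and> rho \<sigma> M i < rho \<sigma> M j)"
  proof (intro allI impI)
    fix i j :: nat assume ij: "i < j"
    show "\<bar>coef e (rho \<sigma> M i) x\<bar> > \<bar>coef e (rho \<sigma> M j) x\<bar> \<or>
        (\<bar>coef e (rho \<sigma> M i) x\<bar> = \<bar>coef e (rho \<sigma> M j) x\<bar> \<and> rho \<sigma> M i < rho \<sigma> M j)"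
    proof (cases "j < M")
      case True thus ?thesis using ij dec[of i j] by (simp add: r1 c1)
    next
      case jM: False
      show ?thesis
      proof (cases "i < M")
        case True thus ?thesis using jM nz[of i] inT[of "j - M"] by (simp add: r1 r2 c1 c2)
      next
        case False thus ?thesis using jM ij infT inT[of "j - M"] inT[of "i - M"]
          by (simp add: r2 c2)
      qed
    qed
  qed
  ultimately show "natural_greedy_ordering e (\<Sum>k<M. a k *\<^sub>R e (\<sigma> k)) (rho \<sigma> M)"
    unfolding natural_greedy_ordering_def x_def by blast
  show "j \<le> M \<Longrightarrow> greedy_sum e (rho \<sigma> M) j (\<Sum>k<M. a k *\<^sub>R e (\<sigma> k)) = (\<Sum>k<j. a k *\<^sub>R e (\<sigma> k))"
    unfolding greedy_sum_def x_def[symmetric] by (intro sum.cong) (auto simp: r1 c1)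
qed



lemma in_clspan: "(\<Sum>k<M. a k *\<^sub>R e (\<sigma> k)) \<in> clspan e"
proof -
  have "(\<Sum>k<M. a k *\<^sub>R e (\<sigma> k)) \<in> span (range e)"
    by (intro span_sum span_scale span_base) auto
  thus ?thesis unfolding clspan_def using closure_subset by blast
qed

lemma G:
  fixes e :: "nat \<Rightarrow> 'a::banach_lattice" and \<sigma> :: "nat \<Rightarrow> nat" and M :: nat
  assumes bs: "basic_sequence e" and ex: "\<exists>C. uqg_bound e C" and inj: "inj_on \<sigma> {..<M}"
    and M: "0 < M"
    and dec: "\<And>i j. i < j \<Longrightarrow> j < M \<Longrightarrow> \<bar>a j\<bar> < \<bar>a i\<bar>"
    and nz: "\<And>k. k < M \<Longrightarrow> a k \<noteq> 0"
  shows "0 \<le> uqg_constant e \<and>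
    norm (abs_join (\<lambda>j. \<Sum>k<j. a k *\<^sub>R e (\<sigma> k)) M) \<le> uqg_constant e * norm (\<Sum>k<M. a k *\<^sub>R e (\<sigma> k))"
proof -
  define x where "x = (\<Sum>k<M. a k *\<^sub>R e (\<sigma> k))"
  define J where "J = abs_join (\<lambda>j. \<Sum>k<j. a k *\<^sub>R e (\<sigma> k)) M"
  define r where "r = norm x"
  have "x \<noteq> 0"
  proof
    assume "x = 0"
    hence "coef e (\<sigma> 0) x = 0" by (simp add: coef_zero[OF bs])
    moreover have "coef e (\<sigma> 0) x = a 0" unfolding x_def by (rule coef_seq(1)[OF bs inj M])
    ultimately show False using nz[OF M] by simp
  qed
  hence r: "r > 0" unfolding r_def by simp
  define a' where "a' = (\<lambda>k. a k / r)"
  define x' where "x' = (\<Sum>k<M. a' k *\<^sub>R e (\<sigma> k))"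
  have x': "x' = (1/r) *\<^sub>R x" unfolding x'_def x_def a'_def
    by (simp add: scaleR_sum_right divide_inverse_commute)
  have nx': "norm x' = 1" using r unfolding x' r_def by simp
  have dec': "\<bar>a' j\<bar> < \<bar>a' i\<bar>" if "i < j" "j < M" for i j
    using dec[OF that] r by (simp add: a'_def abs_divide divide_strict_right_mono)
  have nz': "a' k \<noteq> 0" if "k < M" for k using nz[OF that] r by (simp add: a'_def)
  note N = ngo[where a=a', OF bs inj dec' nz']
  have "greedy_max e (rho \<sigma> M) M x' = abs_join (\<lambda>j. \<Sum>k<j. a' k *\<^sub>R e (\<sigma> k)) M"
    unfolding greedy_max_def x'_def by (rule abs_join_cong) (simp add: N(2))
  also have "\<dots> = abs_join (\<lambda>j. (1/r) *\<^sub>R (\<Sum>k<j. a k *\<^sub>R e (\<sigma> k))) M"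
    by (simp add: a'_def scaleR_sum_right divide_inverse_commute)
  also have "\<dots> = (1/r) *\<^sub>R J" unfolding J_def using r by (simp add: abs_join_scale)
  finally have gm: "norm (greedy_max e (rho \<sigma> M) M x') = norm J / r" using r by simp
  define SS where "SS = {norm (greedy_max e \<rho> m x) | x \<rho> m.
      x \<in> clspan e \<and> norm x = 1 \<and> natural_greedy_ordering e x \<rho>}"
  have mem: "norm J / r \<in> SS" unfolding SS_def gm[symmetric]
    using nx' N(1) in_clspan[where a=a' and M=M and e=e and \<sigma>=\<sigma>] unfolding x'_def by blast
  obtain C where C: "uqg_bound e C" using ex by blast
  have "bdd_above SS" unfolding SS_def bdd_above_def
    using C unfolding uqg_bound_def by force
  hence le: "norm J / r \<le> uqg_constant e" unfolding uqg_constant_def SS_def[symmetric]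
    using mem by (intro cSup_upper)
  have "0 \<le> norm J / r" using r by simp
  hence "0 \<le> uqg_constant e" using le by linarith
  moreover have "norm J \<le> uqg_constant e * r" using le r by (simp add: divide_le_eq)
  ultimately show ?thesis unfolding J_def r_def x_def by simp
qed



lemma Key:
  fixes e :: "nat \<Rightarrow> 'a::banach_lattice" and \<sigma> :: "nat \<Rightarrow> nat" and M :: nat
  assumes bs: "basic_sequence e" and ex: "\<exists>C. uqg_bound e C" and inj: "inj_on \<sigma> {..<M}"
    and sg: "\<And>k. k < M \<Longrightarrow> \<bar>s k\<bar> = 1"
  shows "norm (abs_join (\<lambda>j. \<Sum>k<j. s k *\<^sub>R e (\<sigma> k)) M) \<le> uqg_constant e * norm (\<Sum>k<M. s k *\<^sub>R e (\<sigma> k))"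
proof (cases "M = 0")
  case True thus ?thesis by simp
next
  case False
  hence M: "0 < M" by simp
  define C0 where "C0 = uqg_constant e"
  define f where "f = (\<lambda>j. \<Sum>k<j. s k *\<^sub>R e (\<sigma> k))"
  define V where "V = (\<lambda>j. \<Sum>k<j. (real (M - k) * s k) *\<^sub>R e (\<sigma> k))"
  define K1 where "K1 = (\<Sum>t=1..M. 2 * norm (V t))"
  define ad where "ad = (\<lambda>d k. (1 + real (M - k) * d) * s k)"
  have Gd: "0 \<le> C0 \<and> norm (abs_join (\<lambda>j. \<Sum>k<j. ad d k *\<^sub>R e (\<sigma> k)) M)
      \<le> C0 * norm (\<Sum>k<M. ad d k *\<^sub>R e (\<sigma> k))" if d: "d > 0" for d
    unfolding C0_def
  proof (rule G[OF bs ex inj M])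
    fix i j assume ij: "i < j" "j < M"
    have "real (M - j) * d < real (M - i) * d" using ij d by (intro mult_strict_right_mono) auto
    moreover have "0 \<le> real (M - j) * d" using d by simp
    ultimately show "\<bar>ad d j\<bar> < \<bar>ad d i\<bar>" using sg[of i] sg[of j] ij
      by (simp add: ad_def abs_mult)
  next
    fix k assume "k < M"
    moreover have "0 \<le> real (M - k) * d" using d by simp
    ultimately show "ad d k \<noteq> 0" using sg[of k] by (auto simp: ad_def)
  qed
  have C0: "0 \<le> C0" using Gd[of 1] by simp
  have pt: "ad d k *\<^sub>R w = s k *\<^sub>R w + d *\<^sub>R ((real (M - k) * s k) *\<^sub>R w)" for d k and w :: 'a
    by (simp add: ad_def algebra_simps)
  have fd: "(\<Sum>k<j. ad d k *\<^sub>R e (\<sigma> k)) = f j + d *\<^sub>R V j" for d j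
    by (simp add: pt sum.distrib scaleR_sum_right f_def V_def)
  have bound: "norm (abs_join f M) \<le> C0 * norm (f M) + d * (C0 * norm (V M) + K1)" if d: "d > 0" for d
  proof -
    define Jd where "Jd = abs_join (\<lambda>j. f j + d *\<^sub>R V j) M"
    have 1: "norm Jd \<le> C0 * norm (f M + d *\<^sub>R V M)" using Gd[OF d] unfolding Jd_def fd by simp
    have "norm (f M + d *\<^sub>R V M) \<le> norm (f M) + d * norm (V M)"
      using norm_triangle_ineq[of "f M" "d *\<^sub>R V M"] d by simp
    hence 2: "norm Jd \<le> C0 * norm (f M) + d * (C0 * norm (V M))"
      using 1 C0 by (smt (verit) mult_left_mono distrib_left mult.left_commute)
    have "norm (abs_join f M - Jd) \<le> (\<Sum>t=1..M. 2 * norm (f t - (f t + d *\<^sub>R V t)))"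
      unfolding Jd_def by (rule abs_join_lip)
    also have "\<dots> = d * K1" using d by (simp add: K1_def sum_distrib_left mult.left_commute)
    finally have 3: "norm (abs_join f M - Jd) \<le> d * K1" .
    have "norm (abs_join f M) \<le> norm Jd + norm (abs_join f M - Jd)"
      by (metis add_diff_cancel_left' add_diff_eq norm_triangle_ineq diff_add_cancel)
    thus ?thesis using 2 3 by (simp add: distrib_left)
  qed
  define K where "K = C0 * norm (V M) + K1 + 1"
  have "0 \<le> K1" unfolding K1_def by (simp add: sum_nonneg)
  hence K: "K > 0" unfolding K_def using C0 mult_nonneg_nonneg[OF C0 norm_ge_zero[of "V M"]] by linarith
  have "norm (abs_join f M) \<le> C0 * norm (f M)"
  proof (rule field_le_epsilon)
    fix eps :: real assume eps: "0 < eps"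
    have "norm (abs_join f M) \<le> C0 * norm (f M) + (eps / K) * (C0 * norm (V M) + K1)"
      using bound[of "eps / K"] eps K by simp
    also have "(eps / K) * (C0 * norm (V M) + K1) \<le> (eps / K) * K"
      using eps K by (intro mult_left_mono) (auto simp: K_def)
    also have "\<dots> = eps" using K by simp
    finally show "norm (abs_join f M) \<le> C0 * norm (f M) + eps" by simp
  qed
  thus ?thesis unfolding f_def C0_def .
qed



lemma sl_take:
  assumes "t \<le> length l"
  shows "sum_list (map g (take t l)) = (\<Sum>k<t. g (l ! k))"
  using assms by (simp add: sum_list_sum_nth min_def atLeast0LessThan)

lemma KeyL:
  fixes e :: "nat \<Rightarrow> 'a::banach_lattice" and n :: "nat \<Rightarrow> nat"
  assumes bs: "basic_sequence e" and ex: "\<exists>C. uqg_bound e C" and dl: "distinct l"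
    and inj: "inj_on n (set l)" and sg: "\<And>i. i \<in> set l \<Longrightarrow> \<bar>w i\<bar> = 1"
  shows "norm (abs_join (\<lambda>t. sum_list (map (\<lambda>i. w i *\<^sub>R e (n i)) (take t l))) (length l))
     \<le> uqg_constant e * norm (sum_list (map (\<lambda>i. w i *\<^sub>R e (n i)) l))"
proof -
  define \<sigma> where "\<sigma> = (\<lambda>k. n (l ! k))"
  define s where "s = (\<lambda>k. w (l ! k))"
  have inj\<sigma>: "inj_on \<sigma> {..<length l}"
  proof (rule inj_onI)
    fix i j assume ij: "i \<in> {..<length l}" "j \<in> {..<length l}" "\<sigma> i = \<sigma> j"
    hence "l ! i = l ! j" using inj unfolding \<sigma>_def by (auto dest: inj_onD)
    thus "i = j" using ij dl by (simp add: nth_eq_iff_index_eq)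
  qed
  have sg': "\<bar>s k\<bar> = 1" if "k < length l" for k using sg that unfolding s_def by simp
  have K: "norm (abs_join (\<lambda>j. \<Sum>k<j. s k *\<^sub>R e (\<sigma> k)) (length l))
     \<le> uqg_constant e * norm (\<Sum>k<length l. s k *\<^sub>R e (\<sigma> k))"
    by (rule Key[OF bs ex inj\<sigma> sg'])
  have "abs_join (\<lambda>t. sum_list (map (\<lambda>i. w i *\<^sub>R e (n i)) (take t l))) (length l)
      = abs_join (\<lambda>j. \<Sum>k<j. s k *\<^sub>R e (\<sigma> k)) (length l)"
    by (rule abs_join_cong) (simp add: sl_take s_def \<sigma>_def)
  moreover have "sum_list (map (\<lambda>i. w i *\<^sub>R e (n i)) l) = (\<Sum>k<length l. s k *\<^sub>R e (\<sigma> k))"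
    using sl_take[of "length l" l "\<lambda>i. w i *\<^sub>R e (n i)"] by (simp add: s_def \<sigma>_def)
  ultimately show ?thesis using K by simp
qed

lemma fset: "sum_list (map g (filter Q [a..<b])) = sum g {x\<in>{a..<b}. Q x}"
  by (simp add: sum_list_distinct_conv_sum_set)

lemma U:
  fixes e :: "nat \<Rightarrow> 'a::banach_lattice" and n :: "nat \<Rightarrow> nat"
  assumes bs: "basic_sequence e" and ex: "\<exists>C. uqg_bound e C"
    and inj: "inj_on n {1..m}" and sg: "\<forall>i \<in> {1..m}. \<bar>w i\<bar> = 1"
  shows "\<exists>B. 0 \<le> B \<and> norm B \<le> uqg_constant e * norm (\<Sum>i=1..m. w i *\<^sub>R e (n i)) \<and>
     (\<forall>j \<le> m. lat_abs (\<Sum>i\<in>{x\<in>{1..<Suc j}. Q x}. w i *\<^sub>R e (n i)) \<le> B)"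
proof -
  define l where "l = filter Q [1..<Suc m] @ filter (\<lambda>i. \<not> Q i) [1..<Suc m]"
  define g where "g = (\<lambda>i. w i *\<^sub>R e (n i))"
  define B where "B = abs_join (\<lambda>t. sum_list (map g (take t l))) (length l)"
  have len: "length l = m" unfolding l_def using sum_length_filter_compl[of Q "[1..<Suc m]"] by simp
  have dl: "distinct l" unfolding l_def by auto
  have sl: "set l = {1..m}" unfolding l_def by auto
  have "norm B \<le> uqg_constant e * norm (sum_list (map g l))"
    unfolding B_def g_def by (rule KeyL[OF bs ex dl]) (use inj sg sl in auto)
  also have "sum_list (map g l) = (\<Sum>i=1..m. w i *\<^sub>R e (n i))"
    using dl sl by (simp add: sum_list_distinct_conv_sum_set g_def)
  finally have nB: "norm B \<le> uqg_constant e * norm (\<Sum>i=1..m. w i *\<^sub>R e (n i))" .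
  have B0: "0 \<le> B" unfolding B_def by (rule abs_join_nonneg)
  have "lat_abs (\<Sum>i\<in>{x\<in>{1..<Suc j}. Q x}. w i *\<^sub>R e (n i)) \<le> B" if j: "j \<le> m" for j
  proof -
    define fA where "fA = filter Q [1..<Suc j]"
    have "[1..<Suc m] = [1..<Suc j] @ [Suc j..<Suc m]"
      using upt_add_eq_append[of 1 "Suc j" "m - j"] j by simp
    hence "l = fA @ (filter Q [Suc j..<Suc m] @ filter (\<lambda>i. \<not> Q i) [1..<Suc m])"
      unfolding l_def fA_def by simp
    hence tk: "take (length fA) l = fA" by simp
    have lenA: "length fA \<le> m" using len tk by (metis length_take min.cobounded1 min.absorb_iff2 nat_le_linear)
    have eqA: "(\<Sum>i\<in>{x\<in>{1..<Suc j}. Q x}. w i *\<^sub>R e (n i)) = sum_list (map g (take (length fA) l))"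
    proof -
      have "sum_list (map g (take (length fA) l)) = sum_list (map g fA)" by (simp only: tk)
      also have "\<dots> = (\<Sum>i\<in>{x\<in>{1..<Suc j}. Q x}. w i *\<^sub>R e (n i))"
        unfolding fA_def by (simp only: fset g_def)
      finally show ?thesis by simp
    qed
    show ?thesis
    proof (cases "length fA = 0")
      case True thus ?thesis unfolding eqA using B0 by simp
    next
      case False
      hence "length fA \<in> {1..length l}" using lenA len by (simp add: Suc_le_eq)
      thus ?thesis unfolding eqA B_def by (rule abs_join_ge)
    qed
  qed
  thus ?thesis using B0 nB by blast
qed



lemma split_sum:
  fixes v :: "nat \<Rightarrow> 'a::real_vector"
  assumes j: "j \<le> m" and h: "\<And>i. i \<in> {1..m} \<Longrightarrow> (Q i \<longrightarrow> w1 i = w2 i) \<and> (\<not> Q i \<longrightarrow> w1 i = - w2 i)"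
  shows "(\<Sum>i=1..j. w1 i *\<^sub>R v i) = (\<Sum>i\<in>{x\<in>{1..<Suc j}. Q x}. w2 i *\<^sub>R v i)
      - (\<Sum>i\<in>{x\<in>{1..<Suc j}. \<not> Q x}. w2 i *\<^sub>R v i)"
proof -
  have "(\<Sum>i=1..j. w1 i *\<^sub>R v i) = (\<Sum>i\<in>{1..<Suc j}. (if Q i then w2 i *\<^sub>R v i else 0)
       - (if \<not> Q i then w2 i *\<^sub>R v i else 0))"
  proof (rule sum.cong)
    show "{1..j} = {1..<Suc j}" by auto
  next
    fix i assume "i \<in> {1..<Suc j}"
    hence "i \<in> {1..m}" using j by auto
    thus "w1 i *\<^sub>R v i = (if Q i then w2 i *\<^sub>R v i else 0) - (if \<not> Q i then w2 i *\<^sub>R v i else 0)"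
      using h[of i] by auto
  qed
  also have "\<dots> = (\<Sum>i\<in>{x\<in>{1..<Suc j}. Q x}. w2 i *\<^sub>R v i)
      - (\<Sum>i\<in>{x\<in>{1..<Suc j}. \<not> Q x}. w2 i *\<^sub>R v i)"
    by (simp only: sum_subtractf finite_atLeastLessThan sum.inter_filter)
  finally show ?thesis .
qed

lemma join2:
  fixes B1 B2 :: "'a::banach_lattice"
  assumes "\<And>j. j \<in> {1..m} \<Longrightarrow> lat_abs (f j) \<le> B1 + B2" "0 \<le> B1" "0 \<le> B2"
  shows "norm (abs_join f m) \<le> norm B1 + norm B2"
proof -
  have "abs_join f m \<le> B1 + B2" using assms by (intro abs_join_le) (auto intro: add_nonneg_nonneg)
  hence "norm (abs_join f m) \<le> norm (B1 + B2)" by (intro norm_mono_nonneg abs_join_nonneg)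
  thus ?thesis using norm_triangle_ineq[of B1 B2] by linarith
qed

lemma la_diff_tri: fixes a b :: "'a::banach_lattice"
  shows "lat_abs a \<le> B1 \<Longrightarrow> lat_abs b \<le> B2 \<Longrightarrow> lat_abs (a - b) \<le> B1 + B2"
  using la_triangle[of a "- b"] la_minus[of b] by (metis add_mono diff_conv_add_uminus order_trans)

lemma U':
  fixes e :: "nat \<Rightarrow> 'a::banach_lattice" and n :: "nat \<Rightarrow> nat"
  assumes "basic_sequence e" and "\<exists>C. uqg_bound e C"
    and "inj_on n {1..m}" and "\<forall>i \<in> {1..m}. \<bar>w i\<bar> = 1"
  obtains B where "0 \<le> B" "norm B \<le> uqg_constant e * norm (\<Sum>i=1..m. w i *\<^sub>R e (n i))"
     "\<forall>j \<le> m. lat_abs (\<Sum>i\<in>{x\<in>{1..<Suc j}. Q x}. w i *\<^sub>R e (n i)) \<le> B"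
  using U[OF assms, where Q=Q] by (elim exE conjE) (rule that; assumption)

theorem proposition3p21:
  fixes e :: "nat \<Rightarrow> 'a::banach_lattice"
    and n :: "nat \<Rightarrow> nat" and \<epsilon> :: "nat \<Rightarrow> real" and m :: nat
  assumes "basic_sequence e" and "semi_normalized e"
    and "\<exists>C. uqg_bound e C"
    and "inj_on n {1..m}"
    and "\<forall>i \<in> {1..m}. \<epsilon> i = 1 \<or> \<epsilon> i = -1"
  shows "norm (abs_join (\<lambda>k. \<Sum>i=1..k. e (n i)) m)
           \<le> uqg_constant e * norm (\<Sum>i=1..m. e (n i)) \<and>
         inverse (2 * uqg_constant e) * norm (abs_join (\<lambda>k. \<Sum>i=1..k. e (n i)) m)
           \<le> norm (\<Sum>i=1..m. \<epsilon> i *\<^sub>R e (n i)) \<and>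
         norm (\<Sum>i=1..m. \<epsilon> i *\<^sub>R e (n i))
           \<le> norm (abs_join (\<lambda>k. \<Sum>i=1..k. \<epsilon> i *\<^sub>R e (n i)) m) \<and>
         norm (abs_join (\<lambda>k. \<Sum>i=1..k. \<epsilon> i *\<^sub>R e (n i)) m)
           \<le> 2 * uqg_constant e * norm (\<Sum>i=1..m. e (n i))"
proof -
  note bs = assms(1) and ex = assms(3) and inj = assms(4)
  define C0 where "C0 = uqg_constant e"
  define P where "P = (\<lambda>i. \<epsilon> i = 1)"
  have sg: "\<forall>i\<in>{1..m}. \<bar>\<epsilon> i\<bar> = 1"
  proof
    fix i assume i: "i \<in> {1..m}"
    have "\<epsilon> i = 1 \<or> \<epsilon> i = -1" using assms(5) i by blast
    thus "\<bar>\<epsilon> i\<bar> = 1" by auto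
  qed
  have sg1: "\<forall>i\<in>{1..m}. \<bar>(\<lambda>_. 1::real) i\<bar> = 1" by simp
  have one: "(\<Sum>i=1..k. e (n i)) = (\<Sum>i=1..k. (\<lambda>_. 1::real) i *\<^sub>R e (n i))" for k by simp
  obtain B0 where B0: "0 \<le> B0" "norm B0 \<le> uqg_constant e * norm (\<Sum>i=1..m. (\<lambda>_. 1::real) i *\<^sub>R e (n i))"
    "\<forall>j \<le> m. lat_abs (\<Sum>i\<in>{x\<in>{1..<Suc j}. (\<lambda>_. True) x}. (\<lambda>_. 1::real) i *\<^sub>R e (n i)) \<le> B0"
    by (rule U'[OF bs ex inj, where w="\<lambda>_. 1" and Q="\<lambda>_. True", OF sg1])
  have i1: "norm (abs_join (\<lambda>k. \<Sum>i=1..k. e (n i)) m) \<le> C0 * norm (\<Sum>i=1..m. e (n i))"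
  proof -
    have "abs_join (\<lambda>k. \<Sum>i=1..k. e (n i)) m \<le> B0"
    proof (rule abs_join_le[OF _ B0(1)])
      fix t assume t: "t \<in> {1..m}"
      have "{x\<in>{1..<Suc t}. True} = {1..t}" by auto
      thus "lat_abs (\<Sum>i=1..t. e (n i)) \<le> B0" using B0(3) t by auto
    qed
    hence "norm (abs_join (\<lambda>k. \<Sum>i=1..k. e (n i)) m) \<le> norm B0"
      by (intro norm_mono_nonneg abs_join_nonneg)
    thus ?thesis using B0(2) unfolding C0_def by simp
  qed
  obtain B1 where B1: "0 \<le> B1" "norm B1 \<le> uqg_constant e * norm (\<Sum>i=1..m. \<epsilon> i *\<^sub>R e (n i))"
    "\<forall>j \<le> m. lat_abs (\<Sum>i\<in>{x\<in>{1..<Suc j}. P x}. \<epsilon> i *\<^sub>R e (n i)) \<le> B1"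
    by (rule U'[OF bs ex inj sg, where Q=P])
  obtain B2 where B2: "0 \<le> B2" "norm B2 \<le> uqg_constant e * norm (\<Sum>i=1..m. \<epsilon> i *\<^sub>R e (n i))"
    "\<forall>j \<le> m. lat_abs (\<Sum>i\<in>{x\<in>{1..<Suc j}. \<not> P x}. \<epsilon> i *\<^sub>R e (n i)) \<le> B2"
    by (rule U'[OF bs ex inj sg, where Q="\<lambda>i. \<not> P i"])
  have i2: "norm (abs_join (\<lambda>k. \<Sum>i=1..k. e (n i)) m) \<le> 2 * C0 * norm (\<Sum>i=1..m. \<epsilon> i *\<^sub>R e (n i))"
  proof -
    have "norm (abs_join (\<lambda>k. \<Sum>i=1..k. e (n i)) m) \<le> norm B1 + norm B2"
    proof (rule join2[OF _ B1(1) B2(1)])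
      fix j assume j: "j \<in> {1..m}"
      have "(\<Sum>i=1..j. e (n i)) = (\<Sum>i\<in>{x\<in>{1..<Suc j}. P x}. \<epsilon> i *\<^sub>R e (n i))
          - (\<Sum>i\<in>{x\<in>{1..<Suc j}. \<not> P x}. \<epsilon> i *\<^sub>R e (n i))"
        unfolding one by (rule split_sum) (use j assms(5) in \<open>auto simp: P_def\<close>)
      thus "lat_abs (\<Sum>i=1..j. e (n i)) \<le> B1 + B2"
        using B1(3) B2(3) j by (auto intro: la_diff_tri)
    qed
    thus ?thesis using B1(2) B2(2) unfolding C0_def by linarith
  qed
  have i2': "inverse (2 * C0) * norm (abs_join (\<lambda>k. \<Sum>i=1..k. e (n i)) m)
           \<le> norm (\<Sum>i=1..m. \<epsilon> i *\<^sub>R e (n i))"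
  proof (cases "C0 > 0")
    case True
    have "inverse (2 * C0) * norm (abs_join (\<lambda>k. \<Sum>i=1..k. e (n i)) m)
        \<le> inverse (2 * C0) * (2 * C0 * norm (\<Sum>i=1..m. \<epsilon> i *\<^sub>R e (n i)))"
      using i2 True by (intro mult_left_mono) auto
    also have "\<dots> = norm (\<Sum>i=1..m. \<epsilon> i *\<^sub>R e (n i))" using True by simp
    finally show ?thesis .
  next
    case False
    hence "inverse (2 * C0) \<le> 0" by simp
    hence "inverse (2 * C0) * norm (abs_join (\<lambda>k. \<Sum>i=1..k. e (n i)) m) \<le> 0"
      by (simp add: mult_nonpos_nonneg)
    thus ?thesis by (meson norm_ge_zero order_trans)
  qed
  have i3: "norm (\<Sum>i=1..m. \<epsilon> i *\<^sub>R e (n i)) \<le> norm (abs_join (\<lambda>k. \<Sum>i=1..k. \<epsilon> i *\<^sub>R e (n i)) m)"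
  proof (cases "m = 0")
    case True thus ?thesis by simp
  next
    case False
    hence "m \<in> {1..m}" by simp
    hence "lat_abs (\<Sum>i=1..m. \<epsilon> i *\<^sub>R e (n i)) \<le> abs_join (\<lambda>k. \<Sum>i=1..k. \<epsilon> i *\<^sub>R e (n i)) m"
      by (rule abs_join_ge)
    thus ?thesis by (rule norm_le_la)
  qed
  obtain B3 where B3: "0 \<le> B3" "norm B3 \<le> uqg_constant e * norm (\<Sum>i=1..m. (\<lambda>_. 1::real) i *\<^sub>R e (n i))"
    "\<forall>j \<le> m. lat_abs (\<Sum>i\<in>{x\<in>{1..<Suc j}. P x}. (\<lambda>_. 1::real) i *\<^sub>R e (n i)) \<le> B3"
    by (rule U'[OF bs ex inj, where w="\<lambda>_. 1" and Q=P, OF sg1])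
  obtain B4 where B4: "0 \<le> B4" "norm B4 \<le> uqg_constant e * norm (\<Sum>i=1..m. (\<lambda>_. 1::real) i *\<^sub>R e (n i))"
    "\<forall>j \<le> m. lat_abs (\<Sum>i\<in>{x\<in>{1..<Suc j}. \<not> P x}. (\<lambda>_. 1::real) i *\<^sub>R e (n i)) \<le> B4"
    by (rule U'[OF bs ex inj, where w="\<lambda>_. 1" and Q="\<lambda>i. \<not> P i", OF sg1])
  have i4: "norm (abs_join (\<lambda>k. \<Sum>i=1..k. \<epsilon> i *\<^sub>R e (n i)) m) \<le> 2 * C0 * norm (\<Sum>i=1..m. e (n i))"
  proof -
    have "norm (abs_join (\<lambda>k. \<Sum>i=1..k. \<epsilon> i *\<^sub>R e (n i)) m) \<le> norm B3 + norm B4"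
    proof (rule join2[OF _ B3(1) B4(1)])
      fix j assume j: "j \<in> {1..m}"
      have "(\<Sum>i=1..j. \<epsilon> i *\<^sub>R e (n i)) = (\<Sum>i\<in>{x\<in>{1..<Suc j}. P x}. (\<lambda>_. 1::real) i *\<^sub>R e (n i))
          - (\<Sum>i\<in>{x\<in>{1..<Suc j}. \<not> P x}. (\<lambda>_. 1::real) i *\<^sub>R e (n i))"
        by (rule split_sum) (use j assms(5) in \<open>auto simp: P_def\<close>)
      thus "lat_abs (\<Sum>i=1..j. \<epsilon> i *\<^sub>R e (n i)) \<le> B3 + B4"
        using B3(3) B4(3) j by (auto intro: la_diff_tri)
    qed
    thus ?thesis using B3(2) B4(2) unfolding C0_def by simp
  qed
  show ?thesis using i1 i2' i3 i4 unfolding C0_def by blast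
qed

end
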